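(* Let $\rho:\omega_1\setminus\{0\}\to\omega_1$ be the generic regressive map and let $A\subseteq\omega_1$ be countable and $\rho$-closed. Then there exist ordinals $\beta,\gamma<\omega_1$ with $\beta,\gamma\notin A$, $\beta\neq\gamma$, $\gamma\notin\operatorname{Succ}_\rho(\beta)$, and $\operatorname{Succ}_\rho(\beta)\cap A=\varnothing$.
   Context: $\mathbb P_0$ is the forcing of finite partial regressive functions on $\omega_1$ (finite partial $p:\omega_1\setminus\{0\}\to\omega_1$ with $p(\alpha)<\alpha$); for a $V$-generic $G_0$, $\rho$ is the induced total regressive map $\omega_1\setminus\{0\}\to\omega_1$. $\operatorname{Succ}_\rho(\xi)=\{\eta<\omega_1:\rho(\eta)=\xi\}$. $A$ is $\rho$-closed if $\rho(\eta)\in A$ whenever $0\neq\eta\in A$. *)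

theory Defs
  imports Main "HOL-Library.Countable_Set"
begin

text \<open>omega_1 is modelled as a well-ordered type that is uncountable but all of whose
proper initial segments are countable (this characterises omega_1 up to isomorphism).\<close>

definition omega1_type :: "'a::wellorder itself \<Rightarrow> bool" where
  "omega1_type _ \<longleftrightarrow> \<not> countable (UNIV :: 'a set) \<and> (\<forall>x::'a. countable {y. y < x})"

definition ord0 :: "'a::wellorder" where
  "ord0 = (LEAST x. True)"

definition regressive :: "('a::wellorder \<Rightarrow> 'a) \<Rightarrow> bool" where
  "regressive \<rho> \<longleftrightarrow> (\<forall>\<eta>. \<eta> \<noteq> ord0 \<longrightarrow> \<rho> \<eta> < \<eta>)"

definition Succ :: "('a::wellorder \<Rightarrow> 'a) \<Rightarrow> 'a \<Rightarrow> 'a set" where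
  "Succ \<rho> \<xi> = {\<eta>. \<eta> \<noteq> ord0 \<and> \<rho> \<eta> = \<xi>}"

definition rho_closed :: "('a::wellorder \<Rightarrow> 'a) \<Rightarrow> 'a set \<Rightarrow> bool" where
  "rho_closed \<rho> A \<longleftrightarrow> (\<forall>\<eta>\<in>A. \<eta> \<noteq> ord0 \<longrightarrow> \<rho> \<eta> \<in> A)"

end

theory Submission
  imports Defs
begin

theorem lemma2p6:
  fixes \<rho> :: "'a::wellorder \<Rightarrow> 'a" and A :: "'a set"
  assumes "omega1_type TYPE('a)"
    and "regressive \<rho>"
    and "countable A"
    and "rho_closed \<rho> A"
  shows "\<exists>\<beta> \<gamma>. \<beta> \<notin> A \<and> \<gamma> \<notin> A \<and> \<beta> \<noteq> \<gamma> \<and> \<gamma> \<notin> Succ \<rho> \<beta> \<and> Succ \<rho> \<beta> \<inter> A = {}"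
proof -
  have inf: "infinite (UNIV - A)"
  proof
    assume "finite (UNIV - A)"
    then have "countable (A \<union> (UNIV - A))" using assms(3) countable_finite by blast
    then show False using assms(1) unfolding omega1_type_def by simp
  qed
  obtain b1 where b1: "b1 \<notin> A" using inf by (metis Diff_iff finite.emptyI ex_in_conv)
  have "infinite (UNIV - A - {b1})" using inf by simp
  then obtain b2 where b2: "b2 \<notin> A" "b2 \<noteq> b1" by (metis Diff_iff finite.emptyI ex_in_conv insertI1)
  have "infinite (UNIV - A - {b1} - {b2})" using inf by simp
  then obtain g where g: "g \<notin> A" "g \<noteq> b1" "g \<noteq> b2" by (metis Diff_iff finite.emptyI ex_in_conv insertI1)
  have disj: "Succ \<rho> b \<inter> A = {}" if "b \<notin> A" for b
    using that assms(4) unfolding Succ_def rho_closed_def by auto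
  show ?thesis
  proof (cases "g \<in> Succ \<rho> b1")
    case True
    then have "g \<notin> Succ \<rho> b2" using b2 unfolding Succ_def by auto
    then show ?thesis using b2 g disj by metis
  next
    case False
    then show ?thesis using b1 g disj by metis
  qed
qed

end
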